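(* Let $\dot x=f(x)+\sum_{i=1}^m g_i(x)u_i$ with $m\ge2$, and let $h:\mathbb{R}^n\to\mathbb{R}$ have relative degree $r<n$ at $x$, with $\xi=[h,L_fh,\dots,L_f^{r-1}h]^\top$. If $g_1(x),\dots,g_m(x)$ are linearly independent, then there is no map $\eta:\mathbb{R}^n\to\mathbb{R}^{n-r}$, differentiable at $x$, that satisfies both of the following: (1) the Jacobian $\begin{bmatrix} d\xi\\ d\eta\end{bmatrix}\in\mathbb{R}^{n\times n}$ is nonsingular at $x$; and (2) there is an open set around $x$ on which $L_{g_i}\eta_j=0$ for all $i=1,\dots,m$ and $j=1,\dots,n-r$.
   Context: $L_f$, $L_{g_i}$ denote Lie derivatives along vector fields. $h$ has relative degree $r$ at $x$ if for all $i=1,\dots,m$ and $k=0,\dots,r-2$, $L_{g_i}L_f^k h\equiv0$ on an open set around $x$, and the row vector $[L_{g_1}L_f^{r-1}h(x),\dots,L_{g_m}L_f^{r-1}h(x)]$ has a nonzero entry. *)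

theory Defs
  imports "HOL-Analysis.Analysis"
begin

definition lie :: "(real^'n \<Rightarrow> real^'n) \<Rightarrow> (real^'n \<Rightarrow> real) \<Rightarrow> real^'n \<Rightarrow> real" where
  "lie v phi = (\<lambda>y. frechet_derivative phi (at y) (v y))"

definition dirder :: "real^'n \<Rightarrow> (real^'n \<Rightarrow> real) \<Rightarrow> real^'n \<Rightarrow> real" where
  "dirder w phi = (\<lambda>y. frechet_derivative phi (at y) w)"

definition smooth_fun :: "(real^'n \<Rightarrow> real) \<Rightarrow> bool" where
  "smooth_fun phi \<longleftrightarrow> (\<forall>ws. \<forall>y. foldr dirder ws phi differentiable (at y))"

definition smooth_field :: "(real^'n \<Rightarrow> real^'n) \<Rightarrow> bool" where
  "smooth_field v \<longleftrightarrow> (\<forall>i. smooth_fun (\<lambda>y. v y $ i))"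

definition rel_degree ::
  "(real^'n \<Rightarrow> real^'n) \<Rightarrow> (nat \<Rightarrow> real^'n \<Rightarrow> real^'n) \<Rightarrow> nat \<Rightarrow> (real^'n \<Rightarrow> real) \<Rightarrow> nat \<Rightarrow> real^'n \<Rightarrow> bool" where
  "rel_degree f g m h r x \<longleftrightarrow> 1 \<le> r \<and>
     (\<exists>U. open U \<and> x \<in> U \<and>
        (\<forall>y\<in>U. \<forall>i<m. \<forall>k. k + 2 \<le> r \<longrightarrow> lie (g i) ((lie f ^^ k) h) y = 0)) \<and>
     (\<exists>i<m. lie (g i) ((lie f ^^ (r - 1)) h) x \<noteq> 0)"

text \<open>A fixed enumeration of the coordinate index type by 0, ..., n-1 (used only to order the
  rows of the Jacobian; nonsingularity does not depend on the choice).\<close>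
definition row_idx :: "'n::finite \<Rightarrow> nat" where
  "row_idx = (SOME e. bij_betw e (UNIV :: 'n set) {..<CARD('n)})"

definition stack :: "(real^'n \<Rightarrow> real^'n) \<Rightarrow> (real^'n \<Rightarrow> real) \<Rightarrow> nat \<Rightarrow> (nat \<Rightarrow> real^'n \<Rightarrow> real) \<Rightarrow> nat \<Rightarrow> real^'n \<Rightarrow> real" where
  "stack f h r eta k = (if k < r then (lie f ^^ k) h else eta (k - r))"

definition jacobian_stack :: "(real^'n::finite \<Rightarrow> real^'n) \<Rightarrow> (real^'n \<Rightarrow> real) \<Rightarrow> nat \<Rightarrow> (nat \<Rightarrow> real^'n \<Rightarrow> real) \<Rightarrow> real^'n \<Rightarrow> real^'n^'n" where
  "jacobian_stack f h r eta x = (\<chi> p q. frechet_derivative (stack f h r eta (row_idx p)) (at x) (axis q 1))"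

end

theory Submission imports Defs begin

definition sm :: "nat \<Rightarrow> (real^'n \<Rightarrow> real) \<Rightarrow> bool" where
  "sm n F \<longleftrightarrow> (\<forall>ws. length ws \<le> n \<longrightarrow> (\<forall>y. foldr dirder ws F differentiable (at y)))"

lemma smooth_sm: "smooth_fun F \<longleftrightarrow> (\<forall>n. sm n F)"
  unfolding smooth_fun_def sm_def by blast

lemma dirder_add:
  assumes "\<And>y. A differentiable (at y)" "\<And>y. B differentiable (at y)"
  shows "dirder w (\<lambda>y. A y + B y) = (\<lambda>y. dirder w A y + dirder w B y)"
proof
  fix y
  have "((\<lambda>y. A y + B y) has_derivative (\<lambda>h. frechet_derivative A (at y) h + frechet_derivative B (at y) h)) (at y)"
    using assms by (intro has_derivative_add) (auto simp: frechet_derivative_works[symmetric])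
  then have "frechet_derivative (\<lambda>y. A y + B y) (at y) = (\<lambda>h. frechet_derivative A (at y) h + frechet_derivative B (at y) h)"
    by (rule frechet_derivative_at[symmetric])
  then show "dirder w (\<lambda>y. A y + B y) y = dirder w A y + dirder w B y"
    unfolding dirder_def by simp
qed

lemma dirder_mult:
  assumes "\<And>y. A differentiable (at y)" "\<And>y. B differentiable (at y)"
  shows "dirder w (\<lambda>y. A y * B y) = (\<lambda>y. dirder w A y * B y + A y * dirder w B y)"
proof
  fix y
  have "((\<lambda>y. A y * B y) has_derivative (\<lambda>h. A y * frechet_derivative B (at y) h + frechet_derivative A (at y) h * B y)) (at y)"
    using assms by (intro has_derivative_mult) (auto simp: frechet_derivative_works[symmetric])
  then have "frechet_derivative (\<lambda>y. A y * B y) (at y) = (\<lambda>h. A y * frechet_derivative B (at y) h + frechet_derivative A (at y) h * B y)"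
    by (rule frechet_derivative_at[symmetric])
  then show "dirder w (\<lambda>y. A y * B y) y = dirder w A y * B y + A y * dirder w B y"
    unfolding dirder_def by simp
qed

lemma foldr_add:
  assumes "\<And>ws' y. length ws' < length ws \<Longrightarrow> foldr dirder ws' A differentiable (at y)"
    "\<And>ws' y. length ws' < length ws \<Longrightarrow> foldr dirder ws' B differentiable (at y)"
  shows "foldr dirder ws (\<lambda>y. A y + B y) = (\<lambda>y. foldr dirder ws A y + foldr dirder ws B y)"
  using assms
proof (induction ws)
  case Nil
  then show ?case by simp
next
  case (Cons w ws)
  have "foldr dirder ws (\<lambda>y. A y + B y) = (\<lambda>y. foldr dirder ws A y + foldr dirder ws B y)"
    using Cons.prems by (intro Cons.IH) auto
  then show ?case using Cons.prems by (simp add: dirder_add)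
qed

lemma sm_add: fixes A B :: "real^'n \<Rightarrow> real" shows "sm n A \<Longrightarrow> sm n B \<Longrightarrow> sm n (\<lambda>y. A y + B y)"
  unfolding sm_def
proof (intro allI impI)
  fix ws :: "(real^'n) list" and y assume a: "\<forall>ws. length ws \<le> n \<longrightarrow> (\<forall>y. foldr dirder ws A differentiable at y)"
    "\<forall>ws. length ws \<le> n \<longrightarrow> (\<forall>y. foldr dirder ws B differentiable at y)" and l: "length ws \<le> n"
  have "foldr dirder ws (\<lambda>y. A y + B y) = (\<lambda>y. foldr dirder ws A y + foldr dirder ws B y)"
    using a l by (intro foldr_add) auto
  then show "foldr dirder ws (\<lambda>y. A y + B y) differentiable at y"
    using a l by simp
qed

lemma smooth_add: "smooth_fun A \<Longrightarrow> smooth_fun B \<Longrightarrow> smooth_fun (\<lambda>y. A y + B y)"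
  by (simp add: smooth_sm sm_add)

lemma smooth_diff: fixes A :: "real^'n \<Rightarrow> real" shows "smooth_fun A \<Longrightarrow> smooth_fun (dirder w A)"
  unfolding smooth_fun_def
proof (intro allI)
  fix ws :: "(real^'n) list" and y assume "\<forall>ws y. foldr dirder ws A differentiable at y"
  then have "foldr dirder (ws @ [w]) A differentiable at y" by blast
  then show "foldr dirder ws (dirder w A) differentiable at y" by simp
qed

lemma smooth_differentiable: assumes "smooth_fun A" shows "A differentiable (at y)"
proof -
  have "foldr dirder [] A differentiable (at y)" using assms unfolding smooth_fun_def by blast
  then show ?thesis by simp
qed

lemma sm_mult: fixes A B :: "real^'n \<Rightarrow> real" shows "smooth_fun A \<Longrightarrow> smooth_fun B \<Longrightarrow> sm n (\<lambda>y. A y * B y)"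
proof (induction n arbitrary: A B)
  case 0
  then show ?case unfolding sm_def by (simp add: smooth_differentiable)
next
  case (Suc n)
  show ?case unfolding sm_def
  proof (intro allI impI)
    fix ws :: "(real^'n) list" and y assume l: "length ws \<le> Suc n"
    show "foldr dirder ws (\<lambda>y. A y * B y) differentiable at y"
    proof (cases ws rule: rev_exhaust)
      case Nil
      then show ?thesis using Suc.prems by (simp add: smooth_differentiable)
    next
      case (snoc ws' w)
      have e: "foldr dirder ws (\<lambda>y. A y * B y) = foldr dirder ws' (\<lambda>y. dirder w A y * B y + A y * dirder w B y)"
        using snoc Suc.prems by (simp add: dirder_mult smooth_differentiable)
      have "sm n (\<lambda>y. dirder w A y * B y + A y * dirder w B y)"
        using Suc.prems by (intro sm_add Suc.IH smooth_diff)
      then show ?thesis unfolding e sm_def using l snoc by simp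
    qed
  qed
qed

lemma smooth_mult: "smooth_fun A \<Longrightarrow> smooth_fun B \<Longrightarrow> smooth_fun (\<lambda>y. A y * B y)"
  by (simp add: smooth_sm sm_mult)

lemma smooth_zero: "smooth_fun (\<lambda>y::real^'n. 0::real)"
proof -
  have "foldr dirder ws (\<lambda>y. 0::real) = (\<lambda>y::real^'n. 0)" for ws :: "(real^'n) list"
  proof (induction ws)
    case (Cons w ws)
    have "((\<lambda>y::real^'n. 0::real) has_derivative (\<lambda>h. 0)) (at y)" for y by simp
    then show ?case using Cons by (simp add: dirder_def frechet_derivative_at[symmetric])
  qed simp
  then show ?thesis unfolding smooth_fun_def by simp
qed

lemma smooth_sum: "finite S \<Longrightarrow> (\<And>i. i \<in> S \<Longrightarrow> smooth_fun (F i)) \<Longrightarrow> smooth_fun (\<lambda>y. \<Sum>i\<in>S. F i y)"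
proof (induction S rule: finite_induct)
  case empty
  then show ?case using smooth_zero by simp
next
  case (insert a S)
  then show ?case by (simp add: smooth_add)
qed

lemma lie_expand:
  assumes "\<And>y. A differentiable (at y)"
  shows "lie v A = (\<lambda>y. \<Sum>i\<in>UNIV. v y $ i * dirder (axis i 1) A y)"
proof
  fix y
  have "linear (frechet_derivative A (at y))"
    using assms[of y] by (simp add: frechet_derivative_works has_derivative_linear)
  then have "frechet_derivative A (at y) (\<Sum>i\<in>UNIV. v y $ i *\<^sub>R axis i 1) = (\<Sum>i\<in>UNIV. v y $ i * frechet_derivative A (at y) (axis i 1))"
    by (simp add: linear_sum linear_scale)
  moreover have "(\<Sum>i\<in>UNIV. v y $ i *\<^sub>R axis i (1::real)) = v y"
    using basis_expansion[of "v y"] by (simp add: scalar_mult_eq_scaleR)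
  ultimately show "lie v A y = (\<Sum>i\<in>UNIV. v y $ i * dirder (axis i 1) A y)"
    unfolding lie_def dirder_def by simp
qed

lemma smooth_lie: assumes "smooth_field v" "smooth_fun A" shows "smooth_fun (lie v A)"
proof -
  have "smooth_fun (\<lambda>y. \<Sum>i\<in>UNIV. v y $ i * dirder (axis i 1) A y)"
  proof (rule smooth_sum)
    fix i
    show "smooth_fun (\<lambda>y. v y $ i * dirder (axis i 1) A y)"
      using assms by (intro smooth_mult smooth_diff) (auto simp: smooth_field_def)
  qed simp
  then show ?thesis using lie_expand[OF smooth_differentiable[OF assms(2)]] by simp
qed

lemma smooth_lie_pow: "smooth_field v \<Longrightarrow> smooth_fun A \<Longrightarrow> smooth_fun ((lie v ^^ k) A)"
  by (induction k) (auto simp: smooth_lie)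


lemma row_idx_bij: "bij_betw (row_idx :: 'n::finite \<Rightarrow> nat) UNIV {..<CARD('n)}"
proof -
  have "\<exists>e. bij_betw e (UNIV :: 'n set) {..<CARD('n)}"
    using ex_bij_betw_finite_nat[of "UNIV :: 'n set"] by (simp add: atLeast0LessThan)
  then show ?thesis unfolding row_idx_def by (rule someI_ex)
qed

lemma lin_row:
  assumes "linear F"
  shows "(\<Sum>q\<in>UNIV. F (axis q 1) * v $ q) = F (v :: real^'n)"
proof -
  have "(\<Sum>q\<in>UNIV. v $ q *\<^sub>R axis q (1::real)) = v"
    using basis_expansion[of v] by (simp add: scalar_mult_eq_scaleR)
  then have "F v = F (\<Sum>q\<in>UNIV. v $ q *\<^sub>R axis q 1)" by simp
  also have "\<dots> = (\<Sum>q\<in>UNIV. v $ q * F (axis q 1))"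
    using assms by (simp add: linear_sum linear_scale)
  finally show ?thesis by (simp add: mult.commute)
qed

theorem theorem7:
  fixes f :: "real^'n \<Rightarrow> real^'n" and g :: "nat \<Rightarrow> real^'n \<Rightarrow> real^'n"
    and h :: "real^'n \<Rightarrow> real" and m r :: nat and x :: "real^'n"
  assumes "m \<ge> 2"
    and "smooth_field f" and "\<forall>i<m. smooth_field (g i)" and "smooth_fun h"
    and "rel_degree f g m h r x" and "r < CARD('n)"
    and "\<forall>c. (\<Sum>i<m. c i *\<^sub>R g i x) = 0 \<longrightarrow> (\<forall>i<m. c i = 0)"
  shows "\<not> (\<exists>eta :: nat \<Rightarrow> real^'n \<Rightarrow> real.
              (\<forall>j < CARD('n) - r. eta j differentiable (at x)) \<and>
              invertible (jacobian_stack f h r eta x) \<and>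
              (\<exists>U. open U \<and> x \<in> U \<and>
                 (\<forall>y\<in>U. \<forall>i<m. \<forall>j < CARD('n) - r. lie (g i) (eta j) y = 0)))"
proof
  assume "\<exists>eta :: nat \<Rightarrow> real^'n \<Rightarrow> real.
              (\<forall>j < CARD('n) - r. eta j differentiable (at x)) \<and>
              invertible (jacobian_stack f h r eta x) \<and>
              (\<exists>U. open U \<and> x \<in> U \<and>
                 (\<forall>y\<in>U. \<forall>i<m. \<forall>j < CARD('n) - r. lie (g i) (eta j) y = 0))"
  then obtain eta U where ed: "\<forall>j < CARD('n) - r. eta j differentiable (at x)"
    and inv: "invertible (jacobian_stack f h r eta x)"
    and U: "x \<in> U" "\<forall>y\<in>U. \<forall>i<m. \<forall>j < CARD('n) - r. lie (g i) (eta j) y = 0"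
    by blast
  have etax: "\<And>i j. i < m \<Longrightarrow> j < CARD('n) - r \<Longrightarrow> lie (g i) (eta j) x = 0"
    using U by blast
  from assms(5) have r1: "1 \<le> r" and
    rd0: "\<And>i k. i < m \<Longrightarrow> k + 2 \<le> r \<Longrightarrow> lie (g i) ((lie f ^^ k) h) x = 0"
    unfolding rel_degree_def by blast+
  define F where "F p = frechet_derivative (stack f h r eta (row_idx p)) (at x)" for p :: 'n
  have bij: "bij_betw (row_idx :: 'n \<Rightarrow> nat) UNIV {..<CARD('n)}" by (rule row_idx_bij)
  have rlt: "row_idx p < CARD('n)" for p :: 'n
    using bij by (auto simp: bij_betw_def)
  have diff: "stack f h r eta (row_idx p) differentiable (at x)" for p :: 'n
  proof (cases "row_idx p < r")
    case True
    then show ?thesis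
      using smooth_lie_pow[OF assms(2) assms(4)] by (simp add: stack_def smooth_differentiable)
  next
    case False
    then show ?thesis using ed rlt[of p] by (simp add: stack_def)
  qed
  have linF: "linear (F p)" for p
    using diff[of p] unfolding F_def by (simp add: frechet_derivative_works has_derivative_linear)
  have Jv: "jacobian_stack f h r eta x *v v = (\<chi> p. F p v)" for v
  proof -
    have "(jacobian_stack f h r eta x *v v) $ p = F p v" for p
    proof -
      have "(jacobian_stack f h r eta x *v v) $ p = (\<Sum>q\<in>UNIV. F p (axis q 1) * v $ q)"
        unfolding jacobian_stack_def F_def matrix_vector_mult_def by simp
      also have "\<dots> = F p v" by (rule lin_row[OF linF])
      finally show ?thesis .
    qed
    then show ?thesis by (simp add: vec_eq_iff)
  qed
  have Fg: "F p (g i x) = lie (g i) (stack f h r eta (row_idx p)) x" for p i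
    unfolding F_def lie_def by simp
  have "r - 1 \<in> row_idx ` (UNIV :: 'n set)"
    using bij assms(6) by (simp add: bij_betw_def)
  then obtain p0 :: 'n where p0: "row_idx p0 = r - 1" by (metis imageE)
  have Fzero: "F p (g i x) = 0" if "p \<noteq> p0" "i < m" for p i
  proof (cases "row_idx p < r")
    case True
    have "row_idx p \<noteq> row_idx p0"
      using bij that(1) unfolding bij_betw_def inj_on_def by blast
    then have "row_idx p + 2 \<le> r" using True p0 r1 by linarith
    then show ?thesis using True rd0[OF \<open>i < m\<close>] by (simp add: Fg stack_def)
  next
    case False
    then show ?thesis using etax[OF \<open>i < m\<close>] rlt[of p] by (simp add: Fg stack_def)
  qed
  define a where "a = F p0 (g 0 x)"
  define b where "b = F p0 (g 1 x)"
  define v where "v = (if a = 0 \<and> b = 0 then g 0 x else b *\<^sub>R g 0 x - a *\<^sub>R g 1 x)"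
  have m01: "0 < m" "1 < m" using assms(1) by auto
  have Fv: "F p v = 0" for p
  proof (cases "p = p0")
    case True
    then show ?thesis unfolding v_def using linF[of p] 
      by (auto simp: a_def b_def linear_diff linear_scale)
  next
    case False
    then show ?thesis unfolding v_def using linF[of p] Fzero[OF False m01(1)] Fzero[OF False m01(2)]
      by (auto simp: linear_diff linear_scale)
  qed
  have vnz: "v \<noteq> 0"
  proof
    assume v0: "v = 0"
    show False
    proof (cases "a = 0 \<and> b = 0")
      case True
      define c :: "nat \<Rightarrow> real" where "c i = (if i = 0 then 1 else 0)" for i
      have "(\<Sum>i<m. c i *\<^sub>R g i x) = (\<Sum>i\<in>{..<m}. if i = 0 then g i x else 0)"
        by (rule sum.cong) (auto simp: c_def)
      also have "\<dots> = g 0 x" using m01 by (simp add: sum.delta)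
      finally have "(\<Sum>i<m. c i *\<^sub>R g i x) = g 0 x" .
      then have "c 0 = 0" using assms(7) v0 True m01 unfolding v_def by auto
      then show False by (simp add: c_def)
    next
      case False
      define c :: "nat \<Rightarrow> real" where "c i = (if i = 0 then b else if i = 1 then -a else 0)" for i
      have "(\<Sum>i<m. c i *\<^sub>R g i x) = (\<Sum>i\<in>{0,1}. c i *\<^sub>R g i x)"
        using m01 by (intro sum.mono_neutral_right) (auto simp: c_def)
      also have "\<dots> = b *\<^sub>R g 0 x - a *\<^sub>R g 1 x" by (simp add: c_def)
      finally have "c 0 = 0 \<and> c 1 = 0" using assms(7) v0 False m01 unfolding v_def by auto
      then show False using False by (simp add: c_def)
    qed
  qed
  have Jv0: "jacobian_stack f h r eta x *v v = 0"
    by (simp add: Jv Fv vec_eq_iff)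
  from inv obtain A' where "A' ** jacobian_stack f h r eta x = mat 1"
    unfolding invertible_def by blast
  then have "v = A' *v (jacobian_stack f h r eta x *v v)"
    by (simp add: matrix_vector_mul_assoc)
  then have "v = 0" using Jv0 by simp
  then show False using vnz by simp
qed

end
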